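(* Let $n$ be a positive integer, $1\le k\le n+1$, and let $F_k$ be a (directed or undirected) $k$-profile on $[n]\cup\{0,n+1\}$. Then: (1) there are positions $q_1,q_n$ such that in every permutation of $[n]\cup\{0,n+1\}$ whose (directed, resp. undirected) $k$-profile is $F_k$, the element $1$ is at position $q_1$ and the element $n$ is at position $q_n$; (2) with $l=\min\{q_1,q_n\}$ and $r=\max\{q_1,q_n\}$, the sets $X$, $Y$, $Z$ of elements located strictly between positions $0$ and $l$, strictly between positions $l$ and $r$, and strictly between positions $r$ and $n+1$, respectively, are the same for all permutations whose $k$-profile is $F_k$.
   Context: $[n]=\{1,\dots,n\}$. Permutations are of $[n]\cup\{0,n+1\}$, positions numbered $0,\dots,n+1$, always with $0$ at position $0$ and $n+1$ at position $n+1$. For a permutation $P$ and elements $t<t+i$, let $\min_{t,t+i}$ and $\max_{t,t+i}$ be the minimum and maximum of the elements located on $P$ in the interval delimited by the element $t$ (included) and the element $t+i$ (included). The $k$-profile of $P$ is the set $\{(t,t+i,[\min_{t,t+i},\max_{t,t+i}]) : 1\le i\le k,\ 0\le t\le n+1-i\}$; the directed $k$-profile additionally records, for each such pair, whether $t$ is left or right of $t+i$ in $P$. A ($k$-)profile $F_k$ is any set of constraints of this form (for general integers in place of the min and max); the claim concerns all permutations whose $k$-profile equals $F_k$ (possibly none). *)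

theory Defs
  imports Main
begin

text \<open>A permutation of [n] \<union> {0,n+1} is represented by the map from positions to
elements, P :: nat \<Rightarrow> nat, a bijection of {0..n+1} with P 0 = 0 and P (n+1) = n+1.\<close>

definition fixed_perm :: "nat \<Rightarrow> (nat \<Rightarrow> nat) \<Rightarrow> bool" where
  "fixed_perm n P \<longleftrightarrow> bij_betw P {0..n+1} {0..n+1} \<and> P 0 = 0 \<and> P (n+1) = n+1"

definition pos_of :: "nat \<Rightarrow> (nat \<Rightarrow> nat) \<Rightarrow> nat \<Rightarrow> nat" where
  "pos_of n P x = inv_into {0..n+1} P x"

definition elems_between :: "nat \<Rightarrow> (nat \<Rightarrow> nat) \<Rightarrow> nat \<Rightarrow> nat \<Rightarrow> nat set" where
  "elems_between n P a b =
     P ` {min (pos_of n P a) (pos_of n P b) .. max (pos_of n P a) (pos_of n P b)}"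

definition kprofile :: "bool \<Rightarrow> nat \<Rightarrow> nat \<Rightarrow> (nat \<Rightarrow> nat) \<Rightarrow>
    (nat \<times> nat \<times> (nat \<times> nat) \<times> bool option) set" where
  "kprofile directed k n P =
     {(t, t + i, (Min (elems_between n P t (t+i)), Max (elems_between n P t (t+i))),
       if directed then Some (pos_of n P t < pos_of n P (t+i)) else None)
      | t i. 1 \<le> i \<and> i \<le> k \<and> t + i \<le> n + 1}"

end

theory Submission
  imports Defs
begin

lemma fp_basic:
  assumes "fixed_perm n P"
  shows "x \<le> n+1 \<Longrightarrow> pos_of n P x \<le> n+1"
    and "x \<le> n+1 \<Longrightarrow> P (pos_of n P x) = x"
    and "p \<le> n+1 \<Longrightarrow> pos_of n P (P p) = p"
    and "p \<le> n+1 \<Longrightarrow> P p \<le> n+1"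
    and "pos_of n P 0 = 0"
    and "pos_of n P (n+1) = n+1"
proof -
  have b: "bij_betw P {0..n+1} {0..n+1}" and p0: "P 0 = 0" and pn: "P (n+1) = n+1"
    using assms unfolding fixed_perm_def by auto
  have inj: "inj_on P {0..n+1}" using b bij_betw_imp_inj_on by blast
  have im: "P ` {0..n+1} = {0..n+1}" using b bij_betw_imp_surj_on by blast
  show "x \<le> n+1 \<Longrightarrow> pos_of n P x \<le> n+1"
    unfolding pos_of_def using im by (metis atLeastAtMost_iff inv_into_into zero_le)
  show "x \<le> n+1 \<Longrightarrow> P (pos_of n P x) = x"
    unfolding pos_of_def using im by (metis atLeastAtMost_iff f_inv_into_f zero_le)
  show "p \<le> n+1 \<Longrightarrow> pos_of n P (P p) = p"
    unfolding pos_of_def using inj by (simp add: inv_into_f_f)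
  show "p \<le> n+1 \<Longrightarrow> P p \<le> n+1" using im by auto
  show "pos_of n P 0 = 0" unfolding pos_of_def using inj p0
    by (metis atLeastAtMost_iff inv_into_f_f zero_le)
  show "pos_of n P (n+1) = n+1" unfolding pos_of_def using inj pn
    by (metis atLeastAtMost_iff inv_into_f_f zero_le order_refl)
qed

lemma fp_inj:
  assumes "fixed_perm n P" "x \<le> n+1" "y \<le> n+1"
  shows "(pos_of n P x = pos_of n P y) = (x = y)"
  using fp_basic(2)[OF assms(1)] assms by metis

lemma fp_image:
  assumes "fixed_perm n P"
  shows "P ` {p. p \<le> n+1 \<and> Q p} = {x. x \<le> n+1 \<and> Q (pos_of n P x)}"
proof
  show "P ` {p. p \<le> n+1 \<and> Q p} \<subseteq> {x. x \<le> n+1 \<and> Q (pos_of n P x)}"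
    using fp_basic[OF assms] by auto
  show "{x. x \<le> n+1 \<and> Q (pos_of n P x)} \<subseteq> P ` {p. p \<le> n+1 \<and> Q p}"
  proof
    fix x assume "x \<in> {x. x \<le> n+1 \<and> Q (pos_of n P x)}"
    then show "x \<in> P ` {p. p \<le> n+1 \<and> Q p}"
      using fp_basic[OF assms] by (intro image_eqI[of _ _ "pos_of n P x"]) auto
  qed
qed

lemma eb_char:
  assumes "fixed_perm n P" "t \<le> n+1" "u \<le> n+1"
  shows "elems_between n P t u = {x. x \<le> n+1 \<and>
     min (pos_of n P t) (pos_of n P u) \<le> pos_of n P x \<and> pos_of n P x \<le> max (pos_of n P t) (pos_of n P u)}"
proof -
  have "{min (pos_of n P t) (pos_of n P u) .. max (pos_of n P t) (pos_of n P u)}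
     = {p. p \<le> n+1 \<and> min (pos_of n P t) (pos_of n P u) \<le> p \<and> p \<le> max (pos_of n P t) (pos_of n P u)}"
    using fp_basic(1)[OF assms(1) assms(2)] fp_basic(1)[OF assms(1) assms(3)] by auto
  then show ?thesis unfolding elems_between_def using fp_image[OF assms(1)] by simp
qed

lemma prof1:
  assumes "kprofile d k n P = kprofile d k n P'" "1 \<le> k" "t \<le> n"
  shows "Min (elems_between n P t (t+1)) = Min (elems_between n P' t (t+1)) \<and>
         Max (elems_between n P t (t+1)) = Max (elems_between n P' t (t+1))"
proof -
  have "(t, t+1, (Min (elems_between n P t (t+1)), Max (elems_between n P t (t+1))),
       if d then Some (pos_of n P t < pos_of n P (t+1)) else None) \<in> kprofile d k n P"
    unfolding kprofile_def using assms(2,3) by (auto intro!: exI[of _ t] exI[of _ 1])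
  then have "(t, t+1, (Min (elems_between n P t (t+1)), Max (elems_between n P t (t+1))),
       if d then Some (pos_of n P t < pos_of n P (t+1)) else None) \<in> kprofile d k n P'"
    using assms(1) by simp
  then show ?thesis unfolding kprofile_def by auto
qed

lemma crossL:
  assumes "fixed_perm n P" "2 \<le> t" "t \<le> n"
  shows "(Min (elems_between n P t (t+1)) = 1) =
         ((pos_of n P t < pos_of n P 1) \<noteq> (pos_of n P (t+1) < pos_of n P 1))"
proof -
  let ?S = "elems_between n P t (t+1)"
  note B = fp_basic[OF assms(1)]
  have S: "?S = {x. x \<le> n+1 \<and>
     min (pos_of n P t) (pos_of n P (t+1)) \<le> pos_of n P x \<and> pos_of n P x \<le> max (pos_of n P t) (pos_of n P (t+1))}"
    using eb_char[OF assms(1)] assms by simp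
  have fin: "finite ?S" unfolding S by auto
  have ne: "t \<in> ?S" unfolding S using assms by auto
  have pt0: "pos_of n P t \<noteq> 0" "pos_of n P (t+1) \<noteq> 0"
    using fp_inj[OF assms(1), of t 0] fp_inj[OF assms(1), of "t+1" 0] B(5) assms by auto
  have n0: "0 \<notin> ?S" unfolding S using B(5) pt0 by auto
  have d1: "pos_of n P t \<noteq> pos_of n P 1" "pos_of n P (t+1) \<noteq> pos_of n P 1"
    using fp_inj[OF assms(1), of t 1] fp_inj[OF assms(1), of "t+1" 1] assms by auto
  have i1: "(1 \<in> ?S) = ((pos_of n P t < pos_of n P 1) \<noteq> (pos_of n P (t+1) < pos_of n P 1))"
    unfolding S using d1 assms by auto
  have "(Min ?S = 1) = (1 \<in> ?S)"
  proof
    assume "Min ?S = 1" then show "1 \<in> ?S" using Min_in[OF fin] ne by force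
  next
    assume h: "1 \<in> ?S"
    have "Min ?S \<le> 1" using Min_le[OF fin h] .
    moreover have "Min ?S \<in> ?S" using Min_in[OF fin] ne by blast
    ultimately show "Min ?S = 1" using n0 by (metis le_neq_implies_less less_one)
  qed
  then show ?thesis using i1 by simp
qed

lemma crossR:
  assumes "fixed_perm n P" "t+2 \<le> n"
  shows "(Max (elems_between n P t (t+1)) = n) =
         ((pos_of n P t < pos_of n P n) \<noteq> (pos_of n P (t+1) < pos_of n P n))"
proof -
  let ?S = "elems_between n P t (t+1)"
  note B = fp_basic[OF assms(1)]
  have S: "?S = {x. x \<le> n+1 \<and>
     min (pos_of n P t) (pos_of n P (t+1)) \<le> pos_of n P x \<and> pos_of n P x \<le> max (pos_of n P t) (pos_of n P (t+1))}"
    using eb_char[OF assms(1)] assms by simp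
  have fin: "finite ?S" unfolding S by auto
  have ne: "t \<in> ?S" unfolding S using assms by auto
  have pt0: "pos_of n P t \<noteq> n+1" "pos_of n P (t+1) \<noteq> n+1"
    using fp_inj[OF assms(1), of t "n+1"] fp_inj[OF assms(1), of "t+1" "n+1"] B(6) assms by auto
  have lt: "pos_of n P t \<le> n+1" "pos_of n P (t+1) \<le> n+1" using B(1) assms by auto
  have n0: "n+1 \<notin> ?S" unfolding S using B(6) pt0 lt by auto
  have d1: "pos_of n P t \<noteq> pos_of n P n" "pos_of n P (t+1) \<noteq> pos_of n P n"
    using fp_inj[OF assms(1), of t n] fp_inj[OF assms(1), of "t+1" n] assms by auto
  have i1: "(n \<in> ?S) = ((pos_of n P t < pos_of n P n) \<noteq> (pos_of n P (t+1) < pos_of n P n))"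
    unfolding S using d1 assms by auto
  have le: "\<And>x. x \<in> ?S \<Longrightarrow> x \<le> n+1" unfolding S by auto
  have "(Max ?S = n) = (n \<in> ?S)"
  proof
    assume "Max ?S = n" then show "n \<in> ?S" using Max_in[OF fin] ne by force
  next
    assume h: "n \<in> ?S"
    have "n \<le> Max ?S" using Max_ge[OF fin h] .
    moreover have "Max ?S \<in> ?S" using Max_in[OF fin] ne by blast
    ultimately show "Max ?S = n" using n0 le by (metis le_antisym le_SucE Suc_eq_plus1)
  qed
  then show ?thesis using i1 by simp
qed

lemma agreeL:
  assumes P: "fixed_perm n P" and P': "fixed_perm n P'"
    and pr: "kprofile d k n P = kprofile d k n P'" and k: "1 \<le> k" and x: "x \<le> n+1"
    and n1: "1 \<le> n"
  shows "(pos_of n P x < pos_of n P 1) = (pos_of n P' x < pos_of n P' 1)"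
proof -
  have main: "2 \<le> x \<Longrightarrow> ?thesis"
  proof -
    assume x2: "2 \<le> x"
    show ?thesis using x
    proof (induction x rule: inc_induct)
      case base
      have "pos_of n P 1 \<noteq> n+1" "pos_of n P' 1 \<noteq> n+1"
        using fp_inj[OF P, of 1 "n+1"] fp_inj[OF P', of 1 "n+1"] fp_basic(6)[OF P] fp_basic(6)[OF P'] n1 by auto
      moreover have "pos_of n P 1 \<le> n+1" "pos_of n P' 1 \<le> n+1"
        using fp_basic(1)[OF P] fp_basic(1)[OF P'] by auto
      ultimately show ?case using fp_basic(6)[OF P] fp_basic(6)[OF P'] by auto
    next
      case (step m)
      have m: "2 \<le> m" "m \<le> n" using step x2 by auto
      have "Min (elems_between n P m (m+1)) = Min (elems_between n P' m (m+1))"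
        using prof1[OF pr k, of m] m by auto
      then have c: "((pos_of n P m < pos_of n P 1) \<noteq> (pos_of n P (m+1) < pos_of n P 1)) =
          ((pos_of n P' m < pos_of n P' 1) \<noteq> (pos_of n P' (m+1) < pos_of n P' 1))"
        using crossL[OF P m] crossL[OF P' m] by simp
      show ?case using c step.IH by (simp only: Suc_eq_plus1) argo
    qed
  qed
  show ?thesis
  proof (cases "2 \<le> x")
    case True then show ?thesis using main by blast
  next
    case False
    then have "x = 0 \<or> x = 1" by auto
    then show ?thesis
    proof
      assume "x = 0"
      moreover have "pos_of n P 1 \<noteq> 0" "pos_of n P' 1 \<noteq> 0"
        using fp_inj[OF P, of 1 0] fp_inj[OF P', of 1 0] fp_basic(5)[OF P] fp_basic(5)[OF P'] by auto
      ultimately show ?thesis using fp_basic(5)[OF P] fp_basic(5)[OF P'] by auto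
    qed simp
  qed
qed

lemma agreeR:
  assumes P: "fixed_perm n P" and P': "fixed_perm n P'"
    and pr: "kprofile d k n P = kprofile d k n P'" and k: "1 \<le> k" and x: "x \<le> n+1"
    and n1: "1 \<le> n"
  shows "(pos_of n P x < pos_of n P n) = (pos_of n P' x < pos_of n P' n)"
proof -
  have main: "x + 1 \<le> n \<Longrightarrow> ?thesis"
  proof -
    assume xn: "x + 1 \<le> n"
    have x0: "0 \<le> x" by simp
    show ?thesis using x0
    proof (induction x rule: dec_induct)
      case base
      have "pos_of n P n \<noteq> 0" "pos_of n P' n \<noteq> 0"
        using fp_inj[OF P, of n 0] fp_inj[OF P', of n 0] fp_basic(5)[OF P] fp_basic(5)[OF P'] n1 by auto
      then show ?case using fp_basic(5)[OF P] fp_basic(5)[OF P'] by auto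
    next
      case (step m)
      have m: "m + 2 \<le> n" using step xn by auto
      have "Max (elems_between n P m (m+1)) = Max (elems_between n P' m (m+1))"
        using prof1[OF pr k, of m] m by auto
      then have c: "((pos_of n P m < pos_of n P n) \<noteq> (pos_of n P (m+1) < pos_of n P n)) =
          ((pos_of n P' m < pos_of n P' n) \<noteq> (pos_of n P' (m+1) < pos_of n P' n))"
        using crossR[OF P m] crossR[OF P' m] by simp
      show ?case using c step.IH by (simp only: Suc_eq_plus1) argo
    qed
  qed
  show ?thesis
  proof (cases "x + 1 \<le> n")
    case True then show ?thesis using main by blast
  next
    case False
    then have "x = n \<or> x = n+1" using x by auto
    then show ?thesis
    proof
      assume "x = n+1"
      moreover have "pos_of n P n \<noteq> n+1" "pos_of n P' n \<noteq> n+1"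
        using fp_inj[OF P, of n "n+1"] fp_inj[OF P', of n "n+1"] fp_basic(6)[OF P] fp_basic(6)[OF P'] by auto
      moreover have "pos_of n P n \<le> n+1" "pos_of n P' n \<le> n+1"
        using fp_basic(1)[OF P] fp_basic(1)[OF P'] by auto
      ultimately show ?thesis using fp_basic(6)[OF P] fp_basic(6)[OF P'] by auto
    qed simp
  qed
qed

lemma pos_card:
  assumes P: "fixed_perm n P" and y: "y \<le> n+1"
  shows "pos_of n P y = card {x. x \<le> n+1 \<and> pos_of n P x < pos_of n P y}"
proof -
  have "{x. x \<le> n+1 \<and> pos_of n P x < pos_of n P y} = P ` {p. p \<le> n+1 \<and> p < pos_of n P y}"
    using fp_image[OF P] by simp
  also have "{p. p \<le> n+1 \<and> p < pos_of n P y} = {..<pos_of n P y}"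
    using fp_basic(1)[OF P y] by auto
  finally have e: "{x. x \<le> n+1 \<and> pos_of n P x < pos_of n P y} = P ` {..<pos_of n P y}" .
  have inj: "inj_on P {0..n+1}" using P unfolding fixed_perm_def using bij_betw_imp_inj_on by blast
  have "inj_on P {..<pos_of n P y}"
    by (rule inj_on_subset[OF inj]) (use fp_basic(1)[OF P y] in auto)
  then show ?thesis unfolding e by (simp add: card_image)
qed

lemma same_pos:
  assumes P: "fixed_perm n P" and P': "fixed_perm n P'"
    and pr: "kprofile d k n P = kprofile d k n P'" and k: "1 \<le> k" and n1: "1 \<le> n"
  shows "pos_of n P 1 = pos_of n P' 1" "pos_of n P n = pos_of n P' n"
proof -
  have "{x. x \<le> n+1 \<and> pos_of n P x < pos_of n P 1} = {x. x \<le> n+1 \<and> pos_of n P' x < pos_of n P' 1}"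
    using agreeL[OF P P' pr k _ n1] by auto
  then show "pos_of n P 1 = pos_of n P' 1" using pos_card[OF P, of 1] pos_card[OF P', of 1] by simp
  have "{x. x \<le> n+1 \<and> pos_of n P x < pos_of n P n} = {x. x \<le> n+1 \<and> pos_of n P' x < pos_of n P' n}"
    using agreeR[OF P P' pr k _ n1] by auto
  then show "pos_of n P n = pos_of n P' n" using pos_card[OF P, of n] pos_card[OF P', of n] by simp
qed

theorem claim8:
  fixes n k :: nat and directed :: bool
    and F :: "(nat \<times> nat \<times> (nat \<times> nat) \<times> bool option) set"
  assumes "1 \<le> n" and "1 \<le> k" and "k \<le> n + 1"
  shows "\<exists>q1 qn.
     (\<forall>P. fixed_perm n P \<and> kprofile directed k n P = F \<longrightarrow> P q1 = 1 \<and> P qn = n) \<and>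
     (\<forall>P P'. fixed_perm n P \<and> kprofile directed k n P = F \<and>
             fixed_perm n P' \<and> kprofile directed k n P' = F \<longrightarrow>
        P ` {0<..<min q1 qn} = P' ` {0<..<min q1 qn} \<and>
        P ` {min q1 qn<..<max q1 qn} = P' ` {min q1 qn<..<max q1 qn} \<and>
        P ` {max q1 qn<..<n+1} = P' ` {max q1 qn<..<n+1})"
proof (cases "\<exists>P0. fixed_perm n P0 \<and> kprofile directed k n P0 = F")
  case False then show ?thesis by blast
next
  case True
  then obtain P0 where P0: "fixed_perm n P0" "kprofile directed k n P0 = F" by blast
  define q1 where "q1 = pos_of n P0 1"
  define qn where "qn = pos_of n P0 n"
  have q: "pos_of n P 1 = q1 \<and> pos_of n P n = qn"
    if "fixed_perm n P" "kprofile directed k n P = F" for P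
    using same_pos[OF that(1) P0(1) _ assms(2) assms(1)] that(2) P0(2) q1_def qn_def by auto
  have q1le: "q1 \<le> n+1" "qn \<le> n+1" using fp_basic(1)[OF P0(1)] assms(1) q1_def qn_def by auto
  have part1: "\<forall>P. fixed_perm n P \<and> kprofile directed k n P = F \<longrightarrow> P q1 = 1 \<and> P qn = n"
  proof (intro allI impI)
    fix P assume h: "fixed_perm n P \<and> kprofile directed k n P = F"
    then have "pos_of n P 1 = q1" "pos_of n P n = qn" using q by auto
    moreover have "P (pos_of n P 1) = 1" "P (pos_of n P n) = n"
      using fp_basic(2)[of n P] h assms(1) by auto
    ultimately show "P q1 = 1 \<and> P qn = n" by simp
  qed
  have setc: "P ` {a<..<b} = {x. x \<le> n+1 \<and> a < pos_of n P x \<and> pos_of n P x < b}"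
    if "fixed_perm n P" "b \<le> n+1" for P a b
  proof -
    have "{a<..<b} = {p. p \<le> n+1 \<and> a < p \<and> p < b}" using that(2) by auto
    then show ?thesis using fp_image[OF that(1)] by simp
  qed
  have part2: "P ` {0<..<min q1 qn} = P' ` {0<..<min q1 qn} \<and>
        P ` {min q1 qn<..<max q1 qn} = P' ` {min q1 qn<..<max q1 qn} \<and>
        P ` {max q1 qn<..<n+1} = P' ` {max q1 qn<..<n+1}"
    if P: "fixed_perm n P" "kprofile directed k n P = F"
      and P': "fixed_perm n P'" "kprofile directed k n P' = F" for P P'
  proof -
    have pr: "kprofile directed k n P = kprofile directed k n P'" using P P' by simp
    have qP: "pos_of n P 1 = q1" "pos_of n P n = qn" using q P by auto
    have qP': "pos_of n P' 1 = q1" "pos_of n P' n = qn" using q P' by auto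
    have ag: "(pos_of n P x < q1) = (pos_of n P' x < q1)"
             "(pos_of n P x < qn) = (pos_of n P' x < qn)"
             "(pos_of n P x = q1) = (pos_of n P' x = q1)"
             "(pos_of n P x = qn) = (pos_of n P' x = qn)"
             "(pos_of n P x = 0) = (pos_of n P' x = 0)"
             "(pos_of n P x = n+1) = (pos_of n P' x = n+1)"
      if x: "x \<le> n+1" for x
    proof -
      show "(pos_of n P x < q1) = (pos_of n P' x < q1)"
        using agreeL[OF P(1) P'(1) pr assms(2) x assms(1)] qP qP' by simp
      show "(pos_of n P x < qn) = (pos_of n P' x < qn)"
        using agreeR[OF P(1) P'(1) pr assms(2) x assms(1)] qP qP' by simp
      show "(pos_of n P x = q1) = (pos_of n P' x = q1)"
        using fp_inj[OF P(1) x, of 1] fp_inj[OF P'(1) x, of 1] qP qP' by simp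
      show "(pos_of n P x = qn) = (pos_of n P' x = qn)"
        using fp_inj[OF P(1) x, of n] fp_inj[OF P'(1) x, of n] qP qP' by simp
      show "(pos_of n P x = 0) = (pos_of n P' x = 0)"
        using fp_inj[OF P(1) x, of 0] fp_inj[OF P'(1) x, of 0] fp_basic(5)[OF P(1)] fp_basic(5)[OF P'(1)] by simp
      show "(pos_of n P x = n+1) = (pos_of n P' x = n+1)"
        using fp_inj[OF P(1) x, of "n+1"] fp_inj[OF P'(1) x, of "n+1"] fp_basic(6)[OF P(1)] fp_basic(6)[OF P'(1)] by simp
    qed
    have k1: "\<And>p. (0 < p \<and> p < min q1 qn) = (p \<noteq> 0 \<and> p < q1 \<and> p < qn)" by auto
    have k2: "\<And>p. (min q1 qn < p \<and> p < max q1 qn) = ((p < q1) \<noteq> (p < qn) \<and> p \<noteq> q1 \<and> p \<noteq> qn)" by auto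
    have k3: "\<And>p. p \<le> n+1 \<Longrightarrow> (max q1 qn < p \<and> p < n+1) = (\<not> p < q1 \<and> \<not> p < qn \<and> p \<noteq> q1 \<and> p \<noteq> qn \<and> p \<noteq> n+1)" by auto
    have mle: "min q1 qn \<le> n+1" "max q1 qn \<le> n+1" using q1le by auto
    have e1: "P ` {0<..<min q1 qn} = P' ` {0<..<min q1 qn}"
      unfolding setc[OF P(1) mle(1)] setc[OF P'(1) mle(1)] k1
      apply (rule Collect_cong)
      subgoal for x proof (cases "x \<le> n+1")
        case True then show ?thesis by (simp only: ag[OF True])
      qed simp
      done
    have e2: "P ` {min q1 qn<..<max q1 qn} = P' ` {min q1 qn<..<max q1 qn}"
      unfolding setc[OF P(1) mle(2)] setc[OF P'(1) mle(2)] k2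
      apply (rule Collect_cong)
      subgoal for x proof (cases "x \<le> n+1")
        case True then show ?thesis by (simp only: ag[OF True])
      qed simp
      done
    have e3: "P ` {max q1 qn<..<n+1} = P' ` {max q1 qn<..<n+1}"
    proof -
      have "{x. x \<le> n+1 \<and> max q1 qn < pos_of n P x \<and> pos_of n P x < n+1}
          = {x. x \<le> n+1 \<and> max q1 qn < pos_of n P' x \<and> pos_of n P' x < n+1}"
        apply (rule Collect_cong)
        subgoal for x proof (cases "x \<le> n+1")
          case True then show ?thesis
            by (simp only: k3[OF fp_basic(1)[OF P(1) True]] k3[OF fp_basic(1)[OF P'(1) True]] ag[OF True])
        qed simp
        done
      then show ?thesis using setc[OF P(1), of "n+1"] setc[OF P'(1), of "n+1"] by simp
    qed
    show ?thesis using e1 e2 e3 by blast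
  qed
  show ?thesis
  proof (rule exI[of _ q1], rule exI[of _ qn], rule conjI[OF part1], intro allI impI)
    fix P P' assume h: "fixed_perm n P \<and> kprofile directed k n P = F \<and>
             fixed_perm n P' \<and> kprofile directed k n P' = F"
    show "P ` {0<..<min q1 qn} = P' ` {0<..<min q1 qn} \<and>
        P ` {min q1 qn<..<max q1 qn} = P' ` {min q1 qn<..<max q1 qn} \<and>
        P ` {max q1 qn<..<n+1} = P' ` {max q1 qn<..<n+1}"
      using h part2 by presburger
  qed
qed

end
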